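(* Let $\theta\in\,]0,1[$ be fixed and, for $n\in\mathbb{N}$, let $m=\lfloor\theta n\rfloor$ (with $m\ge1$). There exist constants $\mathcal{C}_1,\mathcal{C}_2>0$ independent of $n,m,x$ such that $$\mathcal{C}_1\lambda_n^m(x)\le\tilde\lambda_n^m(x)\le\mathcal{C}_2\lambda_n^m(x),\qquad |x|\le1,$$ where $\lambda_n^m(x)=\int_{-1}^1|s_n^m(x,y)|w(y)\,dy$ and $\tilde\lambda_n^m(x)=\frac{\pi}{n}\sum_{i=1}^n|s_n^m(x_i^n,x)|$.
   Context: Let $w(x)=(1-x^2)^{-1/2}$ on $[-1,1]$. The orthonormal Chebyshev polynomials are $p_0=\sqrt{1/\pi}$, $p_r(x)=\sqrt{2/\pi}\cos(r\arccos x)$, $r\ge1$; Chebyshev nodes $x_k^n=\cos\frac{(2k-1)\pi}{2n}$, $k=1,\ldots,n$. For $0<m<n$: $\mu_{n,r}^m=1$ if $0\le r\le n-m$, $\frac{m+n-r}{2m}$ if $n-m<r<n+m$, $0$ otherwise; for $r=0,\ldots,n-1$, $q_{n,r}^m=p_r$ if $r\le n-m$ and $q_{n,r}^m=\mu_{n,r}^mp_r-\mu_{n,2n-r}^mp_{2n-r}$ if $n-m<r<n$; $\nu_{n,r}^m=1$ if $r\le n-m$, $\frac{m^2+(n-r)^2}{2m^2}$ if $n-m<r<n$. Orthonormal VP scaling functions: $\tilde\varphi_{n,k}^m=\sum_{r=0}^{n-1}\sqrt{\frac{\pi}{n\nu_{n,r}^m}}p_r(x_k^n)q_{n,r}^m$,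 and $s_n^m(x,y)=\sum_{k=1}^n\tilde\varphi_{n,k}^m(x)\tilde\varphi_{n,k}^m(y)$ (equivalently $\sum_{r=0}^{n-1}q_{n,r}^m(x)q_{n,r}^m(y)/\nu_{n,r}^m$). *)

theory Defs
  imports "HOL-Analysis.Analysis"
begin

definition cheb_w :: "real \<Rightarrow> real" where
  "cheb_w y = 1 / sqrt (1 - y^2)"

definition cheb_p :: "nat \<Rightarrow> real \<Rightarrow> real" where
  "cheb_p r x = (if r = 0 then sqrt (1/pi) else sqrt (2/pi) * cos (real r * arccos x))"

definition cheb_node :: "nat \<Rightarrow> nat \<Rightarrow> real" where
  "cheb_node n k = cos ((2 * real k - 1) * pi / (2 * real n))"

definition vp_mu :: "nat \<Rightarrow> nat \<Rightarrow> nat \<Rightarrow> real" where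
  "vp_mu n m r = (if r \<le> n - m then 1
                  else if n - m < r \<and> r < n + m then (real m + real n - real r) / (2 * real m)
                  else 0)"

definition vp_q :: "nat \<Rightarrow> nat \<Rightarrow> nat \<Rightarrow> real \<Rightarrow> real" where
  "vp_q n m r x = (if r \<le> n - m then cheb_p r x
                   else vp_mu n m r * cheb_p r x - vp_mu n m (2*n - r) * cheb_p (2*n - r) x)"

definition vp_nu :: "nat \<Rightarrow> nat \<Rightarrow> nat \<Rightarrow> real" where
  "vp_nu n m r = (if r \<le> n - m then 1
                  else (real m ^ 2 + (real n - real r) ^ 2) / (2 * real m ^ 2))"

definition vp_phi :: "nat \<Rightarrow> nat \<Rightarrow> nat \<Rightarrow> real \<Rightarrow> real" where
  "vp_phi n m k x = (\<Sum>r<n. sqrt (pi / (real n * vp_nu n m r)) * cheb_p r (cheb_node n k) * vp_q n m r x)"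

definition vp_s :: "nat \<Rightarrow> nat \<Rightarrow> real \<Rightarrow> real \<Rightarrow> real" where
  "vp_s n m x y = (\<Sum>k=1..n. vp_phi n m k x * vp_phi n m k y)"

definition vp_lambda :: "nat \<Rightarrow> nat \<Rightarrow> real \<Rightarrow> real" where
  "vp_lambda n m x = integral {-1..1} (\<lambda>y. \<bar>vp_s n m x y\<bar> * cheb_w y)"

definition vp_lambda_tilde :: "nat \<Rightarrow> nat \<Rightarrow> real \<Rightarrow> real" where
  "vp_lambda_tilde n m x = pi / real n * (\<Sum>i=1..n. \<bar>vp_s n m (cheb_node n i) x\<bar>)"

end

theory Submission
  imports Defs
begin


definition eps :: "nat \<Rightarrow> real" where "eps r = (if r = 0 then 1 else 2)"
definition tk :: "(nat \<Rightarrow> real) \<Rightarrow> nat \<Rightarrow> real \<Rightarrow> real \<Rightarrow> real" where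
 "tk c L u a = (\<Sum>r<L. c r * eps r * cos (real r * u) * cos (real r * a))"
definition fej :: "nat \<Rightarrow> nat \<Rightarrow> real" where "fej K r = max 0 (1 - real r / real K)"
definition nang :: "nat \<Rightarrow> nat \<Rightarrow> real" where "nang n k = (2 * real k - 1) * pi / (2 * real n)"

lemma int_cos_lin:
  fixes k :: int assumes "k \<noteq> 0"
  shows "((\<lambda>u. cos (real_of_int k * u)) has_integral 0) {0..pi}"
proof -
  have "((\<lambda>u. cos (real_of_int k * u)) has_integral
        (sin (real_of_int k * pi) / real_of_int k - sin (real_of_int k * 0) / real_of_int k)) {0..pi}"
    apply (rule fundamental_theorem_of_calculus)
     apply simp
    apply (rule has_real_derivative_iff_has_vector_derivative[THEN iffD1])
    using assms by (auto intro!: derivative_eq_intros)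
  moreover have "sin (real_of_int k * pi) = 0"
    by (metis mult.commute sin_npi_int)
  ultimately show ?thesis by simp
qed

lemma int_cos_nat:
  "((\<lambda>u. cos (real j * u)) has_integral (if j = 0 then pi else 0)) {0..pi}"
proof (cases "j = 0")
  case True then show ?thesis using has_integral_const_real[of "1::real" 0 pi] by simp
next
  case False
  then show ?thesis using int_cos_lin[of "int j"] by simp
qed

lemma int_cos_cos:
  "((\<lambda>u. cos (real j * u) * cos (real r * u)) has_integral
      (if j = r then pi / eps r else 0)) {0..pi}"
proof -
  have e: "cos (real j * u) * cos (real r * u) =
     (cos (real_of_int (int j + int r) * u) + cos (real_of_int (int j - int r) * u)) / 2" for u
    by (simp add: cos_add cos_diff algebra_simps)
  have i1: "((\<lambda>u. cos (real_of_int (int j + int r) * u)) has_integral (if j + r = 0 then pi else 0)) {0..pi}"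
    using int_cos_nat[of "j+r"] by simp
  have i2: "((\<lambda>u. cos (real_of_int (int j - int r) * u)) has_integral (if j = r then pi else 0)) {0..pi}"
  proof (cases "j = r")
    case True then show ?thesis using has_integral_const_real[of "1::real" 0 pi] by simp
  next
    case False then show ?thesis using int_cos_lin[of "int j - int r"] by simp
  qed
  have "((\<lambda>u. (cos (real_of_int (int j + int r) * u) + cos (real_of_int (int j - int r) * u)) / 2)
     has_integral ((if j + r = 0 then pi else 0) + (if j = r then pi else 0)) / 2) {0..pi}"
    using has_integral_add[OF i1 i2] has_integral_divide by blast
  moreover have "((if j + r = 0 then pi else 0) + (if j = r then pi else 0)) / 2 = (if j = r then pi / eps r else 0)"
    by (auto simp: eps_def)
  ultimately show ?thesis unfolding e by simp
qed

lemma int_tk: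
  assumes "0 < L"
  shows "((\<lambda>u. tk c L u a) has_integral (pi * c 0)) {0..pi}"
proof -
  have "((\<lambda>u. \<Sum>r<L. (c r * eps r * cos (real r * a)) * cos (real r * u)) has_integral
      (\<Sum>r<L. (c r * eps r * cos (real r * a)) * (if r = 0 then pi else 0))) {0..pi}"
    by (intro has_integral_sum has_integral_mult_right int_cos_nat) auto
  moreover have "(\<Sum>r<L. (c r * eps r * cos (real r * a)) * (if r = 0 then pi else 0)) = pi * c 0"
    using assms by (simp add: if_distrib sum.delta eps_def cong: if_cong)
  ultimately show ?thesis unfolding tk_def by (simp add: algebra_simps)
qed

lemma reproduce:
  assumes "L' \<le> L" "\<And>j. j < L' \<Longrightarrow> c j = 1"
  shows "((\<lambda>u. (\<Sum>j<L'. b j * cos (real j * u)) * tk c L u a) has_integral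
          (pi * (\<Sum>j<L'. b j * cos (real j * a)))) {0..pi}"
proof -
  have e: "(\<Sum>j<L'. b j * cos (real j * u)) * tk c L u a =
     (\<Sum>j<L'. \<Sum>r<L. (b j * c r * eps r * cos (real r * a)) * (cos (real j * u) * cos (real r * u)))" for u
    unfolding tk_def sum_product by (intro sum.cong refl) (simp add: algebra_simps)
  have "((\<lambda>u. \<Sum>j<L'. \<Sum>r<L. (b j * c r * eps r * cos (real r * a)) * (cos (real j * u) * cos (real r * u)))
     has_integral (\<Sum>j<L'. \<Sum>r<L. (b j * c r * eps r * cos (real r * a)) * (if j = r then pi / eps r else 0))) {0..pi}"
    by (intro has_integral_sum has_integral_mult_right int_cos_cos) auto
  moreover have "(\<Sum>j<L'. \<Sum>r<L. (b j * c r * eps r * cos (real r * a)) * (if j = r then pi / eps r else 0))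
       = (\<Sum>j<L'. pi * (b j * cos (real j * a)))"
  proof (intro sum.cong refl)
    fix j assume j: "j \<in> {..<L'}"
    then have jL: "j \<in> {..<L}" using assms(1) by auto
    have "(\<Sum>r<L. (b j * c r * eps r * cos (real r * a)) * (if j = r then pi / eps r else 0))
        = (\<Sum>r<L. if r = j then (b j * c j * eps j * cos (real j * a)) * (pi / eps j) else 0)"
      by (intro sum.cong refl) auto
    also have "\<dots> = (b j * c j * eps j * cos (real j * a)) * (pi / eps j)"
      using jL by (simp add: sum.delta)
    also have "\<dots> = pi * (b j * cos (real j * a))"
      using assms(2)[of j] j by (simp add: eps_def)
    finally show "(\<Sum>r<L. (b j * c r * eps r * cos (real r * a)) * (if j = r then pi / eps r else 0)) = pi * (b j * cos (real j * a))" .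
  qed
  ultimately show ?thesis unfolding e by (simp add: sum_distrib_left)
qed

lemma tele_cos:
  "(\<Sum>k=1..N. 2 * sin al * cos ((2 * real k - 1) * al)) = sin (2 * real N * al)"
proof (induction N)
  case 0 then show ?case by simp
next
  case (Suc N)
  have "2 * sin al * cos ((2 * real (Suc N) - 1) * al) = sin (2 * real (Suc N) * al) - sin (2 * real N * al)"
  proof -
    have a: "2 * real (Suc N) * al = (2 * real (Suc N) - 1) * al + al" by (simp add: algebra_simps)
    have b: "2 * real N * al = (2 * real (Suc N) - 1) * al - al" by (simp add: algebra_simps)
    show ?thesis unfolding a b sin_add sin_diff by (simp add: algebra_simps)
  qed
  then show ?case using Suc by simp
qed

lemma disc_cos:
  assumes "0 < j" "j < 2 * n"
  shows "(\<Sum>k=1..n. cos (real j * nang n k)) = 0"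
proof -
  define al where "al = real j * pi / (2 * real n)"
  have n: "0 < n" using assms by auto
  have e: "real j * nang n k = (2 * real k - 1) * al" for k
    unfolding nang_def al_def by (simp add: field_simps)
  have "0 < al" unfolding al_def using assms n by auto
  moreover have "al < pi" unfolding al_def using assms n by (simp add: field_simps)
  ultimately have s: "sin al \<noteq> 0" using sin_gt_zero by force
  have "2 * sin al * (\<Sum>k=1..n. cos (real j * nang n k)) = sin (2 * real n * al)"
    unfolding e sum_distrib_left tele_cos[symmetric] by simp
  also have "2 * real n * al = real j * pi" unfolding al_def using n by simp
  also have "sin (real j * pi) = 0" by simp
  finally show ?thesis using s by simp
qed

lemma disc_tk:
  assumes "L \<le> 2 * n" "0 < L"
  shows "(\<Sum>k=1..n. tk c L u (nang n k)) = real n * c 0"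
proof -
  have "(\<Sum>k=1..n. tk c L u (nang n k)) = (\<Sum>r<L. c r * eps r * cos (real r * u) * (\<Sum>k=1..n. cos (real r * nang n k)))"
    unfolding tk_def sum_distrib_left by (subst sum.swap) (simp add: algebra_simps)
  also have "\<dots> = (\<Sum>r<L. if r = 0 then real n * c 0 else 0)"
    by (intro sum.cong refl) (use assms disc_cos in \<open>auto simp: eps_def\<close>)
  also have "\<dots> = real n * c 0" using assms by (simp add: sum.delta)
  finally show ?thesis .
qed



lemma sum_eps_cos:
  "(\<Sum>r<Suc K. eps r * cos (real r * t)) = 1 + 2 * (\<Sum>k<K. cos (real (K - k) * t))"
proof -
  have "(\<Sum>k<K. cos (real (K - k) * t)) = (\<Sum>k<K. cos (real (Suc (K - Suc k)) * t))"
    by (intro sum.cong refl) (simp add: Suc_diff_Suc)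
  also have "\<dots> = (\<Sum>i<K. cos (real (Suc i) * t))"
    using sum.nat_diff_reindex[of "\<lambda>i. cos (real (Suc i) * t)" K] by simp
  finally have e: "(\<Sum>k<K. cos (real (K - k) * t)) = (\<Sum>i<K. cos (real (Suc i) * t))" .
  show ?thesis unfolding e sum.lessThan_Suc_shift by (simp add: eps_def sum_distrib_left)
qed

lemma fejer_sq:
  "(\<Sum>k<K. cos (real k * t))^2 + (\<Sum>k<K. sin (real k * t))^2 =
     (\<Sum>r<K. (real K - real r) * eps r * cos (real r * t))"
proof (induction K)
  case 0 then show ?case by simp
next
  case (Suc K)
  define C where "C = (\<Sum>k<K. cos (real k * t))"
  define S where "S = (\<Sum>k<K. sin (real k * t))"
  have cs: "C * cos (real K * t) + S * sin (real K * t) = (\<Sum>k<K. cos (real (K - k) * t))"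
    unfolding C_def S_def sum_distrib_right sum.distrib[symmetric]
    by (intro sum.cong refl) (simp add: of_nat_diff cos_diff left_diff_distrib)
  have "(\<Sum>k<Suc K. cos (real k * t))^2 + (\<Sum>k<Suc K. sin (real k * t))^2
      = (C + cos (real K * t))^2 + (S + sin (real K * t))^2" by (simp add: C_def S_def)
  also have "\<dots> = (C^2 + S^2) + 2 * (C * cos (real K * t) + S * sin (real K * t)) + ((sin (real K * t))^2 + (cos (real K * t))^2)"
    by (simp add: power2_eq_square algebra_simps)
  also have "\<dots> = (\<Sum>r<K. (real K - real r) * eps r * cos (real r * t)) + (\<Sum>r<Suc K. eps r * cos (real r * t))"
    unfolding cs sum_eps_cos using Suc by (simp add: C_def S_def)
  also have "\<dots> = (\<Sum>r<Suc K. (real (Suc K) - real r) * eps r * cos (real r * t))"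
    by (simp add: sum.distrib[symmetric] algebra_simps)
  finally show ?case .
qed

lemma tk_fej_K_nonneg:
  assumes "0 < K"
  shows "0 \<le> tk (fej K) K u a"
proof -
  define F where "F t = (\<Sum>r<K. (real K - real r) * eps r * cos (real r * t))" for t
  have F0: "0 \<le> F t" for t unfolding F_def fejer_sq[symmetric] by simp
  have "tk (fej K) K u a = (F (u - a) + F (u + a)) / (2 * real K)"
    unfolding F_def tk_def sum.distrib[symmetric] sum_divide_distrib
  proof (intro sum.cong refl)
    fix r assume "r \<in> {..<K}"
    then have "fej K r = (real K - real r) / real K" using assms unfolding fej_def by (auto simp: field_simps)
    moreover have "cos (real r * (u - a)) + cos (real r * (u + a)) = 2 * cos (real r * u) * cos (real r * a)"
      by (simp add: right_diff_distrib distrib_left cos_diff cos_add)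
    ultimately show "fej K r * eps r * cos (real r * u) * cos (real r * a) =
      ((real K - real r) * eps r * cos (real r * (u - a)) + (real K - real r) * eps r * cos (real r * (u + a))) / (2 * real K)"
    proof -
      have "fej K r * eps r * cos (real r * u) * cos (real r * a) = ((real K - real r) / real K) * eps r * (2 * cos (real r * u) * cos (real r * a)) / 2"
        using \<open>fej K r = _\<close> by simp
      also have "\<dots> = ((real K - real r) / real K) * eps r * (cos (real r * (u - a)) + cos (real r * (u + a))) / 2"
        using \<open>cos (real r * (u - a)) + _ = _\<close> by simp
      also have "\<dots> = ((real K - real r) * eps r * cos (real r * (u - a)) + (real K - real r) * eps r * cos (real r * (u + a))) / (2 * real K)"
        by (simp add: field_simps)
      finally show ?thesis .
    qed
  qed
  then show ?thesis using F0[of "u-a"] F0[of "u+a"] by simp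
qed

lemma fej_zero: "0 < K \<Longrightarrow> K \<le> r \<Longrightarrow> fej K r = 0"
  by (simp add: fej_def field_simps)

lemma tk_fej_ext:
  assumes "K \<le> L" "0 < K"
  shows "tk (fej K) L u a = tk (fej K) K u a"
  unfolding tk_def
  by (rule sum.mono_neutral_right) (use assms fej_zero in \<open>auto\<close>)

lemma tk_fej_nonneg:
  assumes "0 < K" "K \<le> L"
  shows "0 \<le> tk (fej K) L u a"
  using tk_fej_ext[OF assms(2,1)] tk_fej_K_nonneg[OF assms(1)] by simp

lemma tk_fej0: "0 < K \<Longrightarrow> fej K 0 = 1"
  by (simp add: fej_def)

lemma tk_lin:
  assumes "\<And>r. r < L \<Longrightarrow> c r = al * d r - be * e r"
  shows "tk c L u a = al * tk d L u a - be * tk e L u a"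
  unfolding tk_def sum_distrib_left sum_subtractf[symmetric]
  by (intro sum.cong refl) (simp add: assms algebra_simps)

lemma tk_abs_bound:
  assumes "\<And>r. r < L \<Longrightarrow> c r = al * fej A r - be * fej B r"
    and "0 \<le> al" "0 \<le> be" "0 < A" "A \<le> L" "0 < B" "B \<le> L"
  shows "\<bar>tk c L u a\<bar> \<le> al * tk (fej A) L u a + be * tk (fej B) L u a"
proof -
  have "0 \<le> tk (fej A) L u a" "0 \<le> tk (fej B) L u a" using tk_fej_nonneg assms by auto
  then have "0 \<le> al * tk (fej A) L u a" "0 \<le> be * tk (fej B) L u a" using assms(2,3) by auto
  moreover have "tk c L u a = al * tk (fej A) L u a - be * tk (fej B) L u a"
    by (rule tk_lin) (rule assms(1))
  ultimately show ?thesis by linarith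
qed



definition kap :: "nat \<Rightarrow> real" where "kap r = (if r = 0 then sqrt (1/pi) else sqrt (2/pi))"

lemma kap_sq: "kap r * kap r = eps r / pi"
  by (simp add: kap_def eps_def)

lemma cheb_p_cos:
  assumes "0 \<le> u" "u \<le> pi"
  shows "cheb_p r (cos u) = kap r * cos (real r * u)"
  using assms by (simp add: cheb_p_def kap_def arccos_cos)

lemma nang_range:
  assumes "1 \<le> k" "k \<le> n"
  shows "0 < nang n k" "nang n k < pi"
proof -
  have n: "0 < real n" using assms by auto
  have "0 < 2 * real k - 1" using assms by auto
  then show "0 < nang n k" unfolding nang_def using n by simp
  have "(2 * real k - 1) / (2 * real n) < 1" using assms n by (simp add: field_simps)
  then have "(2 * real k - 1) / (2 * real n) * pi < 1 * pi" by (intro mult_strict_right_mono) auto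
  then show "nang n k < pi" unfolding nang_def by simp
qed

lemma node_eq: "cheb_node n k = cos (nang n k)"
  by (simp add: cheb_node_def nang_def)

lemma cos_alias:
  assumes "1 \<le> k" "k \<le> n" "r \<le> 2 * n"
  shows "cos (real (2 * n - r) * nang n k) = - cos (real r * nang n k)"
proof -
  have n: "0 < n" using assms by auto
  have e: "real (2 * n - r) * nang n k = real (2 * k - 1) * pi - real r * nang n k"
    using assms n by (simp add: nang_def of_nat_diff field_simps)
  have o: "odd (2 * k - 1)" using assms by presburger
  have r: "real (2 * k - 1) = 2 * real k - 1" using assms by (simp add: of_nat_diff)
  have c1: "cos ((2 * real k - 1) * pi) = -1" using o cos_npi[of "2*k-1"] unfolding r by simp
  have s1: "sin ((2 * real k - 1) * pi) = 0" using sin_npi[of "2*k-1"] unfolding r by simp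
  show ?thesis unfolding e cos_diff r c1 s1 by simp
qed

lemma cos_n_node:
  assumes "1 \<le> k" "k \<le> n"
  shows "cos (real n * nang n k) = 0"
proof (cases "n = 0")
  case True then show ?thesis using assms by simp
next
  case False
  have e: "real n * nang n k = real k * pi - pi / 2"
    using False by (simp add: nang_def field_simps)
  show ?thesis unfolding e cos_diff by simp
qed

lemma p_alias:
  assumes "1 \<le> k" "k \<le> n" "0 < r" "r < 2 * n"
  shows "cheb_p (2 * n - r) (cheb_node n k) = - cheb_p r (cheb_node n k)"
proof -
  note nr = nang_range[OF assms(1,2)]
  have "kap (2 * n - r) = kap r" using assms by (simp add: kap_def)
  then show ?thesis unfolding node_eq using nr cos_alias[OF assms(1,2), of r] assms
    by (simp add: cheb_p_cos)
qed

lemma p_n_node: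
  assumes "1 \<le> k" "k \<le> n"
  shows "cheb_p n (cheb_node n k) = 0"
  unfolding node_eq using nang_range[OF assms] cos_n_node[OF assms]
  by (simp add: cheb_p_cos)

lemma mu_sum1:
  assumes "m < n" "n - m < r" "r < n"
  shows "vp_mu n m r + vp_mu n m (2 * n - r) = 1"
proof -
  have a: "\<not> r \<le> n - m" "\<not> 2*n - r \<le> n - m" "2*n - r < n + m" "n - m < 2*n-r" "r < n+m" "0 < m"
    using assms by auto
  have b: "real (2 * n - r) = 2 * real n - real r" using assms by (simp add: of_nat_diff)
  show ?thesis using a unfolding vp_mu_def b by (simp add: field_simps)
qed

lemma q_node:
  assumes "1 \<le> k" "k \<le> n" "m < n" "r < n"
  shows "vp_q n m r (cheb_node n k) = cheb_p r (cheb_node n k)"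
proof (cases "r \<le> n - m")
  case True then show ?thesis by (simp add: vp_q_def)
next
  case False
  then have r: "0 < r" "r < 2 * n" "n - m < r" using assms by auto
  have "vp_q n m r (cheb_node n k) = (vp_mu n m r + vp_mu n m (2 * n - r)) * cheb_p r (cheb_node n k)"
    using False p_alias[OF assms(1,2) r(1,2)] by (simp add: vp_q_def algebra_simps)
  then show ?thesis using mu_sum1[OF assms(3) r(3) assms(4)] by simp
qed

lemma disc_cos0:
  assumes "j < 2 * n"
  shows "(\<Sum>k=1..n. cos (real j * nang n k)) = (if j = 0 then real n else 0)"
  using disc_cos[of j n] assms by auto

lemma disc_cos_cos:
  assumes "r < n" "r' < n"
  shows "(\<Sum>k=1..n. cos (real r * nang n k) * cos (real r' * nang n k)) = (if r = r' then real n / eps r else 0)"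
proof -
  define d where "d = (if r' \<le> r then r - r' else r' - r)"
  have e: "cos (real r * t) * cos (real r' * t) = (cos (real (r + r') * t) + cos (real d * t)) / 2" for t
  proof -
    have "cos (real d * t) = cos (real r * t - real r' * t)"
      unfolding d_def by (cases "r' \<le> r") (auto simp: of_nat_diff left_diff_distrib cos_diff)
    then show ?thesis by (simp add: cos_diff cos_add distrib_right)
  qed
  have "(\<Sum>k=1..n. cos (real r * nang n k) * cos (real r' * nang n k)) =
     ((\<Sum>k=1..n. cos (real (r + r') * nang n k)) + (\<Sum>k=1..n. cos (real d * nang n k))) / 2"
    unfolding e sum_divide_distrib[symmetric] sum.distrib by simp
  also have "\<dots> = ((if r + r' = 0 then real n else 0) + (if d = 0 then real n else 0)) / 2"
    using assms by (subst disc_cos0, simp)+ (auto simp: d_def)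
  also have "\<dots> = (if r = r' then real n / eps r else 0)"
    by (auto simp: d_def eps_def)
  finally show ?thesis .
qed

lemma disc_orth:
  assumes "r < n" "r' < n"
  shows "(\<Sum>k=1..n. cheb_p r (cheb_node n k) * cheb_p r' (cheb_node n k)) = (if r = r' then real n / pi else 0)"
proof -
  have "(\<Sum>k=1..n. cheb_p r (cheb_node n k) * cheb_p r' (cheb_node n k)) =
     (\<Sum>k=1..n. kap r * kap r' * (cos (real r * nang n k) * cos (real r' * nang n k)))"
    by (intro sum.cong refl) (use nang_range in \<open>auto simp: node_eq cheb_p_cos less_imp_le\<close>)
  also have "\<dots> = kap r * kap r' * (if r = r' then real n / eps r else 0)"
    by (simp add: sum_distrib_left disc_cos_cos[OF assms, symmetric])
  also have "\<dots> = (if r = r' then real n / pi else 0)"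
    using kap_sq[of r] by (auto simp: eps_def)
  finally show ?thesis .
qed

lemma kernel_node:
  assumes "0 < m" "m < n" "1 \<le> j" "j \<le> n" "0 \<le> u" "u \<le> pi"
  shows "tk (vp_mu n m) (n + m) u (nang n j) = pi * (\<Sum>r<n. vp_q n m r (cos u) * cheb_p r (cheb_node n j))"
proof -
  define x where "x = cheb_node n j"
  define g where "g r = vp_mu n m r * cheb_p r (cos u) * cheb_p r x" for r
  define B where "B r = (if r \<le> n - m then 0 else - vp_mu n m (2 * n - r) * cheb_p (2 * n - r) (cos u) * cheb_p r x)" for r
  note nr = nang_range[OF assms(3,4)]
  have s1: "tk (vp_mu n m) (n + m) u (nang n j) = pi * (\<Sum>r<n+m. g r)"
    unfolding tk_def sum_distrib_left
  proof (intro sum.cong refl)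
    fix r
    have "g r = vp_mu n m r * (kap r * kap r) * cos (real r * u) * cos (real r * nang n j)"
      unfolding g_def x_def node_eq using nr assms(5,6) by (simp add: cheb_p_cos less_imp_le)
    then show "vp_mu n m r * eps r * cos (real r * u) * cos (real r * nang n j) = pi * g r"
      unfolding kap_sq by simp
  qed
  have s2: "(\<Sum>r<n+m. g r) = (\<Sum>r<n. g r) + (\<Sum>r\<in>{n<..<n+m}. g r)"
  proof -
    have "{..<n+m} = {..<n} \<union> insert n {n<..<n+m}" using assms(1) by auto
    then have "(\<Sum>r<n+m. g r) = sum g ({..<n} \<union> insert n {n<..<n+m})" by (simp only:)
    also have "\<dots> = (\<Sum>r<n. g r) + (\<Sum>r\<in>insert n {n<..<n+m}. g r)"
      by (subst sum.union_disjoint) auto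
    finally have "(\<Sum>r<n+m. g r) = (\<Sum>r<n. g r) + (\<Sum>r\<in>insert n {n<..<n+m}. g r)" .
    also have "(\<Sum>r\<in>insert n {n<..<n+m}. g r) = g n + (\<Sum>r\<in>{n<..<n+m}. g r)" by simp
    also have "g n = 0" unfolding g_def x_def using p_n_node[OF assms(3,4)] by simp
    finally show ?thesis by simp
  qed
  have s4: "(\<Sum>r\<in>{n<..<n+m}. g r) = (\<Sum>r\<in>{n-m<..<n}. g (2 * n - r))"
    by (rule sum.reindex_bij_witness[of _ "\<lambda>r. 2 * n - r" "\<lambda>r. 2 * n - r"]) (use assms in auto)
  have s5: "(\<Sum>r\<in>{n-m<..<n}. g (2 * n - r)) = (\<Sum>r<n. B r)"
  proof -
    have "{..<n} = {..n-m} \<union> {n-m<..<n}" using assms by auto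
    then have "(\<Sum>r<n. B r) = sum B ({..n-m} \<union> {n-m<..<n})" by (simp only:)
    also have "\<dots> = (\<Sum>r\<in>{..n-m}. B r) + (\<Sum>r\<in>{n-m<..<n}. B r)"
      by (subst sum.union_disjoint) auto
    finally have "(\<Sum>r<n. B r) = (\<Sum>r\<in>{..n-m}. B r) + (\<Sum>r\<in>{n-m<..<n}. B r)" .
    also have "(\<Sum>r\<in>{..n-m}. B r) = 0" unfolding B_def by simp
    also have "(\<Sum>r\<in>{n-m<..<n}. B r) = (\<Sum>r\<in>{n-m<..<n}. g (2 * n - r))"
    proof (intro sum.cong refl)
      fix r assume r: "r \<in> {n-m<..<n}"
      then have "0 < r" "r < 2 * n" by auto
      from p_alias[OF assms(3,4) this] have "cheb_p (2 * n - r) x = - cheb_p r x" unfolding x_def .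
      then show "B r = g (2 * n - r)" unfolding B_def g_def using r by auto
    qed
    finally show ?thesis by simp
  qed
  have s6: "(\<Sum>r<n. vp_q n m r (cos u) * cheb_p r (cheb_node n j)) = (\<Sum>r<n. g r) + (\<Sum>r<n. B r)"
    unfolding sum.distrib[symmetric]
  proof (intro sum.cong refl)
    fix r assume "r \<in> {..<n}"
    show "vp_q n m r (cos u) * cheb_p r (cheb_node n j) = g r + B r"
    proof (cases "r \<le> n - m")
      case True then show ?thesis by (simp add: vp_q_def g_def B_def vp_mu_def x_def)
    next
      case False then show ?thesis by (simp add: vp_q_def g_def B_def x_def algebra_simps)
    qed
  qed
  show ?thesis using s1 s2 s4 s5 s6 by simp
qed

lemma prod_sums: fixes f g :: "nat \<Rightarrow> real" shows "(\<Sum>r\<in>R. f r) * (c * (\<Sum>r'\<in>R'. g r')) = (\<Sum>r\<in>R. \<Sum>r'\<in>R'. c * (f r * g r'))"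
proof -
  have "(\<Sum>r\<in>R. f r) * (c * (\<Sum>r'\<in>R'. g r')) = c * ((\<Sum>r\<in>R. f r) * (\<Sum>r'\<in>R'. g r'))" by (rule mult.left_commute)
  also have "\<dots> = c * (\<Sum>r\<in>R. \<Sum>r'\<in>R'. f r * g r')" by (simp add: sum_product)
  also have "\<dots> = (\<Sum>r\<in>R. \<Sum>r'\<in>R'. c * (f r * g r'))" by (simp add: sum_distrib_left)
  finally show ?thesis .
qed

lemma interp:
  assumes "0 < m" "m < n" "0 \<le> u" "u \<le> pi"
  shows "(\<Sum>r<n. a r * vp_q n m r (cos u)) =
     (\<Sum>j=1..n. (\<Sum>r<n. a r * vp_q n m r (cheb_node n j)) * tk (vp_mu n m) (n + m) u (nang n j)) / real n"
proof -
  have n: "0 < real n" using assms by auto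
  have "(\<Sum>j=1..n. (\<Sum>r<n. a r * vp_q n m r (cheb_node n j)) * tk (vp_mu n m) (n + m) u (nang n j))
     = (\<Sum>j=1..n. (\<Sum>r<n. a r * cheb_p r (cheb_node n j)) * (pi * (\<Sum>r'<n. vp_q n m r' (cos u) * cheb_p r' (cheb_node n j))))"
    by (intro sum.cong refl arg_cong2[where f="(*)"]) (use assms q_node kernel_node in auto)
  also have "\<dots> = (\<Sum>j=1..n. \<Sum>r<n. \<Sum>r'<n. pi * (a r * vp_q n m r' (cos u) * (cheb_p r (cheb_node n j) * cheb_p r' (cheb_node n j))))"
    unfolding prod_sums by (intro sum.cong refl) (simp add: algebra_simps)
  also have "\<dots> = (\<Sum>r<n. \<Sum>j=1..n. \<Sum>r'<n. pi * (a r * vp_q n m r' (cos u) * (cheb_p r (cheb_node n j) * cheb_p r' (cheb_node n j))))"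
    by (rule sum.swap)
  also have "\<dots> = (\<Sum>r<n. \<Sum>r'<n. \<Sum>j=1..n. pi * (a r * vp_q n m r' (cos u) * (cheb_p r (cheb_node n j) * cheb_p r' (cheb_node n j))))"
    by (rule sum.cong[OF refl]) (rule sum.swap)
  also have "\<dots> = pi * (\<Sum>r<n. \<Sum>r'<n. a r * vp_q n m r' (cos u) * (\<Sum>j=1..n. cheb_p r (cheb_node n j) * cheb_p r' (cheb_node n j)))"
    by (simp add: sum_distrib_left)
  also have "\<dots> = pi * (\<Sum>r<n. \<Sum>r'<n. if r' = r then a r * vp_q n m r (cos u) * (real n / pi) else 0)"
    by (rule arg_cong[where f="\<lambda>t. pi * t"], rule sum.cong[OF refl], rule sum.cong[OF refl]) (auto simp: disc_orth[simplified])
  also have "\<dots> = real n * (\<Sum>r<n. a r * vp_q n m r (cos u))"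
    by (simp add: sum.delta sum_distrib_left mult.commute)
  finally show ?thesis using n by simp
qed

lemma phi_interp:
  assumes "0 < m" "m < n" "0 \<le> u" "u \<le> pi"
  shows "vp_phi n m k (cos u) = (\<Sum>j=1..n. vp_phi n m k (cheb_node n j) * tk (vp_mu n m) (n + m) u (nang n j)) / real n"
  unfolding vp_phi_def by (rule interp[OF assms])

lemma s_interp:
  assumes "0 < m" "m < n" "0 \<le> u" "u \<le> pi"
  shows "vp_s n m x (cos u) = (\<Sum>j=1..n. vp_s n m x (cheb_node n j) * tk (vp_mu n m) (n + m) u (nang n j)) / real n"
proof -
  have "vp_s n m x (cos u) = (\<Sum>k=1..n. vp_phi n m k x * ((\<Sum>j=1..n. vp_phi n m k (cheb_node n j) * tk (vp_mu n m) (n + m) u (nang n j)) / real n))"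
    unfolding vp_s_def using phi_interp[OF assms] by simp
  also have "\<dots> = (\<Sum>k=1..n. \<Sum>j=1..n. vp_phi n m k x * vp_phi n m k (cheb_node n j) * tk (vp_mu n m) (n + m) u (nang n j)) / real n"
    by (simp add: sum_divide_distrib sum_distrib_left algebra_simps)
  also have "\<dots> = (\<Sum>j=1..n. \<Sum>k=1..n. vp_phi n m k x * vp_phi n m k (cheb_node n j) * tk (vp_mu n m) (n + m) u (nang n j)) / real n"
    by (subst sum.swap) simp
  also have "\<dots> = (\<Sum>j=1..n. vp_s n m x (cheb_node n j) * tk (vp_mu n m) (n + m) u (nang n j)) / real n"
    unfolding vp_s_def sum_distrib_right by simp
  finally show ?thesis .
qed



definition Qf :: "nat \<Rightarrow> nat \<Rightarrow> real \<Rightarrow> real \<Rightarrow> real" where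
  "Qf n m x u = (\<Sum>j=1..n. vp_s n m x (cheb_node n j) * tk (vp_mu n m) (n + m) u (nang n j)) / real n"

lemma cont_tk: "continuous_on S (\<lambda>u. tk c L u a)"
  unfolding tk_def by (intro continuous_intros)

lemma cont_Qf: "continuous_on S (Qf n m x)"
  unfolding Qf_def tk_def by (cases "n = 0") (auto intro!: continuous_intros)

lemma int_on_cont: "continuous_on {0..pi} f \<Longrightarrow> (f :: real \<Rightarrow> real) integrable_on {0..pi}"
  by (rule integrable_continuous_interval)

lemma mu_fej:
  assumes "0 < m" "m < n"
  shows "vp_mu n m r = (real (n + m) / (2 * real m)) * fej (n + m) r - (real (n - m) / (2 * real m)) * fej (n - m) r"
proof -
  have nm: "real (n - m) = real n - real m" using assms by (simp add: of_nat_diff)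
  have m: "0 < real m" using assms by simp
  have nm0: "0 < real n - real m" using assms by simp
  have np: "0 < real n + real m" using assms by simp
  have c1: "(real n + real m)/(2*real m) * (real r/(real n + real m)) = real r/(2*real m)" using np by simp
  have a1: "(real (n + m) / (2 * real m)) * (1 - real r / (real n + real m)) = (real n + real m - real r) / (2 * real m)"
    unfolding of_nat_add right_diff_distrib c1 by (simp add: diff_divide_distrib)
  consider "r \<le> n - m" | "n - m < r \<and> r < n + m" | "n + m \<le> r" by linarith
  then show ?thesis
  proof cases
    case 1
    then have "real r \<le> real (n - m)" by (simp only: of_nat_le_iff)
    then have r: "real r \<le> real n - real m" using nm by linarith
    have f1: "fej (n + m) r = 1 - real r / (real n + real m)"
      unfolding fej_def using r m by (auto simp: field_simps)
    have f2: "fej (n - m) r = 1 - real r / (real n - real m)"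
      unfolding fej_def nm using r nm0 by (auto simp: field_simps)
    have c2: "(real n - real m)/(2*real m) * (real r/(real n - real m)) = real r/(2*real m)" using nm0 by simp
    have a2: "(real (n - m) / (2 * real m)) * (1 - real r / (real n - real m)) = (real n - real m - real r) / (2 * real m)"
      unfolding nm right_diff_distrib c2 by (simp add: diff_divide_distrib)
    have "vp_mu n m r = 1" using 1 by (simp add: vp_mu_def)
    then show ?thesis unfolding f1 f2 a1 a2 using m by (simp add: field_simps)
  next
    case 2
    then have "real (n - m) < real r" "real r < real (n + m)" by (simp_all only: of_nat_less_iff)
    then have r: "real n - real m < real r" "real r < real n + real m" using nm by simp_all
    have f1: "fej (n + m) r = 1 - real r / (real n + real m)"
      unfolding fej_def using r m by (auto simp: field_simps)
    have f2: "fej (n - m) r = 0"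
      unfolding fej_def nm using r nm0 by (auto simp: field_simps)
    show ?thesis using 2 unfolding f1 f2 a1 vp_mu_def by simp
  next
    case 3
    then have "real (n + m) \<le> real r" by (simp only: of_nat_le_iff)
    then have r: "real n + real m \<le> real r" by simp
    have f1: "fej (n + m) r = 0"
      unfolding fej_def using r m by (auto simp: field_simps)
    have f2: "fej (n - m) r = 0"
      unfolding fej_def nm using r nm0 by (auto simp: field_simps)
    show ?thesis using 3 assms unfolding f1 f2 vp_mu_def by auto
  qed
qed

lemma int_Q_le:
  assumes "0 < m" "m < n"
  shows "integral {0..pi} (\<lambda>u. \<bar>Qf n m x u\<bar>) \<le> (real n / real m) * (pi / real n * (\<Sum>j=1..n. \<bar>vp_s n m x (cheb_node n j)\<bar>))"
proof -
  define c where "c j = vp_s n m x (cheb_node n j)" for j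
  define al where "al = real (n + m) / (2 * real m)"
  define be where "be = real (n - m) / (2 * real m)"
  define A where "A j u = tk (fej (n + m)) (n + m) u (nang n j)" for j u
  define B where "B j u = tk (fej (n - m)) (n + m) u (nang n j)" for j u
  define R where "R u = (\<Sum>j=1..n. \<bar>c j\<bar> * (al * A j u + be * B j u)) / real n" for u
  have n: "0 < real n" using assms by simp
  have albe: "0 \<le> al" "0 \<le> be" unfolding al_def be_def by auto
  have kb: "\<bar>tk (vp_mu n m) (n + m) u a\<bar> \<le> al * tk (fej (n + m)) (n + m) u a + be * tk (fej (n - m)) (n + m) u a" for u a
    unfolding al_def be_def
    by (rule tk_abs_bound) (use assms mu_fej in auto)
  have bnd: "\<bar>Qf n m x u\<bar> \<le> R u" for u
  proof -
    have "\<bar>Qf n m x u\<bar> = \<bar>\<Sum>j=1..n. c j * tk (vp_mu n m) (n + m) u (nang n j)\<bar> / real n"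
      unfolding Qf_def c_def using n by simp
    also have "\<dots> \<le> (\<Sum>j=1..n. \<bar>c j * tk (vp_mu n m) (n + m) u (nang n j)\<bar>) / real n"
      using n by (intro divide_right_mono sum_abs) auto
    also have "\<dots> \<le> R u"
      unfolding R_def A_def B_def abs_mult using n kb
      by (intro divide_right_mono sum_mono mult_left_mono) auto
    finally show ?thesis .
  qed
  have hR: "(R has_integral ((\<Sum>j=1..n. \<bar>c j\<bar> * (al * pi + be * pi)) / real n)) {0..pi}"
    unfolding R_def
    apply (intro has_integral_divide has_integral_sum has_integral_mult_right has_integral_add)
    using int_tk[of "n+m" "fej (n+m)"] int_tk[of "n+m" "fej (n-m)"] assms
    by (auto simp: A_def B_def tk_fej0)
  have "integral {0..pi} (\<lambda>u. \<bar>Qf n m x u\<bar>) \<le> integral {0..pi} R"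
  proof (rule integral_le)
    show "(\<lambda>u. \<bar>Qf n m x u\<bar>) integrable_on {0..pi}" by (intro int_on_cont continuous_on_rabs cont_Qf)
    show "R integrable_on {0..pi}" using hR by blast
  qed (use bnd in auto)
  also have "\<dots> = (\<Sum>j=1..n. \<bar>c j\<bar> * (al * pi + be * pi)) / real n" using hR by (rule integral_unique)
  also have "\<dots> = (al + be) * (pi / real n * (\<Sum>j=1..n. \<bar>c j\<bar>))"
    by (simp add: sum_distrib_left sum_distrib_right sum_divide_distrib algebra_simps)
  also have "al + be = real n / real m"
    unfolding al_def be_def using assms by (simp add: of_nat_diff add_divide_distrib[symmetric])
  finally show ?thesis unfolding c_def .
qed

definition rh :: "nat \<Rightarrow> nat \<Rightarrow> nat \<Rightarrow> real" where
  "rh n m r = (2 * real n / real (n - m)) * fej (2 * n) r - (real (n + m) / real (n - m)) * fej (n + m) r"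

lemma rh_one:
  assumes "0 < m" "m < n" "j < n + m"
  shows "rh n m j = 1"
proof -
  have nm: "real (n - m) = real n - real m" using assms by (simp add: of_nat_diff)
  have nm0: "0 < real n - real m" using assms by simp
  have np: "0 < real n + real m" using assms by simp
  have n: "0 < real n" using assms by simp
  have j1: "real j < 2 * real n" using assms by linarith
  have j2: "real j < real n + real m" using assms by linarith
  have f1: "fej (2 * n) j = 1 - real j / (2 * real n)" unfolding fej_def using j1 n by (auto simp: field_simps)
  have f2: "fej (n + m) j = 1 - real j / (real n + real m)" unfolding fej_def using j2 np by (auto simp: field_simps)
  have c1: "(2 * real n) / (real n - real m) * (real j / (2 * real n)) = real j / (real n - real m)" using n by simp
  have c2: "(real n + real m) / (real n - real m) * (real j / (real n + real m)) = real j / (real n - real m)" using np by simp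
  have "rh n m j = (2 * real n) / (real n - real m) - (real n + real m) / (real n - real m)"
    unfolding rh_def f1 f2 nm of_nat_add right_diff_distrib c1 c2 by simp
  also have "\<dots> = 1" using nm0 by (simp add: diff_divide_distrib[symmetric])
  finally show ?thesis .
qed

lemma Q_cos:
  "Qf n m x u = (\<Sum>r<n+m. ((\<Sum>j=1..n. vp_s n m x (cheb_node n j) * (vp_mu n m r * eps r * cos (real r * nang n j))) / real n) * cos (real r * u))"
proof -
  have "Qf n m x u = (\<Sum>j=1..n. \<Sum>r<n+m. vp_s n m x (cheb_node n j) * (vp_mu n m r * eps r * cos (real r * nang n j)) * cos (real r * u)) / real n"
    unfolding Qf_def tk_def sum_distrib_left by (simp add: algebra_simps)
  also have "\<dots> = (\<Sum>r<n+m. \<Sum>j=1..n. vp_s n m x (cheb_node n j) * (vp_mu n m r * eps r * cos (real r * nang n j)) * cos (real r * u)) / real n"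
    by (subst sum.swap) simp
  also have "\<dots> = (\<Sum>r<n+m. ((\<Sum>j=1..n. vp_s n m x (cheb_node n j) * (vp_mu n m r * eps r * cos (real r * nang n j))) / real n) * cos (real r * u))"
    by (simp add: sum_divide_distrib sum_distrib_right)
  finally show ?thesis .
qed

lemma Q_reproduce:
  assumes "0 < m" "m < n"
  shows "((\<lambda>u. Qf n m x u * tk (rh n m) (2 * n) u a) has_integral (pi * Qf n m x a)) {0..pi}"
  unfolding Q_cos
  by (rule reproduce) (use assms rh_one in auto)

lemma Q_node_bound:
  assumes "0 < m" "m < n"
  shows "\<bar>Qf n m x a\<bar> \<le> integral {0..pi} (\<lambda>u. \<bar>Qf n m x u\<bar> *
     ((2 * real n / real (n - m)) * tk (fej (2 * n)) (2 * n) u a + (real (n + m) / real (n - m)) * tk (fej (n + m)) (2 * n) u a)) / pi"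
proof -
  define al where "al = 2 * real n / real (n - m)"
  define be where "be = real (n + m) / real (n - m)"
  have albe: "0 \<le> al" "0 \<le> be" unfolding al_def be_def by auto
  have kb: "\<bar>tk (rh n m) (2 * n) u a\<bar> \<le> al * tk (fej (2 * n)) (2 * n) u a + be * tk (fej (n + m)) (2 * n) u a" for u
    unfolding al_def be_def
    by (rule tk_abs_bound) (use assms in \<open>auto simp: rh_def\<close>)
  have h: "((\<lambda>u. Qf n m x u * tk (rh n m) (2 * n) u a) has_integral (pi * Qf n m x a)) {0..pi}"
    by (rule Q_reproduce[OF assms])
  have "\<bar>pi * Qf n m x a\<bar> = norm (integral {0..pi} (\<lambda>u. Qf n m x u * tk (rh n m) (2 * n) u a))"
    using h by (simp add: integral_unique)
  also have "\<dots> \<le> integral {0..pi} (\<lambda>u. \<bar>Qf n m x u\<bar> * (al * tk (fej (2 * n)) (2 * n) u a + be * tk (fej (n + m)) (2 * n) u a))"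
  proof (rule integral_norm_bound_integral)
    show "(\<lambda>u. Qf n m x u * tk (rh n m) (2 * n) u a) integrable_on {0..pi}" using h by blast
    show "(\<lambda>u. \<bar>Qf n m x u\<bar> * (al * tk (fej (2 * n)) (2 * n) u a + be * tk (fej (n + m)) (2 * n) u a)) integrable_on {0..pi}"
      by (intro int_on_cont continuous_intros cont_Qf cont_tk)
    fix u
    show "norm (Qf n m x u * tk (rh n m) (2 * n) u a) \<le> \<bar>Qf n m x u\<bar> * (al * tk (fej (2 * n)) (2 * n) u a + be * tk (fej (n + m)) (2 * n) u a)"
      unfolding real_norm_def abs_mult by (intro mult_left_mono kb) auto
  qed
  finally show ?thesis unfolding al_def be_def by (simp add: abs_mult field_simps)
qed

lemma tilde_le:
  assumes "0 < m" "m < n"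
  shows "pi / real n * (\<Sum>i=1..n. \<bar>Qf n m x (nang n i)\<bar>) \<le>
     ((3 * real n + real m) / (real n - real m)) * integral {0..pi} (\<lambda>u. \<bar>Qf n m x u\<bar>)"
proof -
  define al where "al = 2 * real n / real (n - m)"
  define be where "be = real (n + m) / real (n - m)"
  define F where "F i u = \<bar>Qf n m x u\<bar> * (al * tk (fej (2 * n)) (2 * n) u (nang n i) + be * tk (fej (n + m)) (2 * n) u (nang n i))" for i u
  have n: "0 < real n" using assms by simp
  have Fi: "F i integrable_on {0..pi}" for i
    unfolding F_def by (intro int_on_cont continuous_intros cont_Qf cont_tk)
  have sumF: "(\<Sum>i=1..n. F i u) = \<bar>Qf n m x u\<bar> * (real n * (al + be))" for u
  proof -
    have "(\<Sum>i=1..n. F i u) = \<bar>Qf n m x u\<bar> * (al * (\<Sum>i=1..n. tk (fej (2 * n)) (2 * n) u (nang n i)) + be * (\<Sum>i=1..n. tk (fej (n + m)) (2 * n) u (nang n i)))"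
      unfolding F_def by (simp only: sum_distrib_left sum.distrib[symmetric])
    also have "\<dots> = \<bar>Qf n m x u\<bar> * (al * real n + be * real n)"
    proof -
      have d1: "(\<Sum>i=1..n. tk (fej (2 * n)) (2 * n) u (nang n i)) = real n"
        using disc_tk[of "2*n" n "fej (2*n)" u] assms by (simp add: tk_fej0)
      have d2: "(\<Sum>i=1..n. tk (fej (n + m)) (2 * n) u (nang n i)) = real n"
        using disc_tk[of "2*n" n "fej (n+m)" u] assms by (simp add: tk_fej0)
      show ?thesis by (simp only: d1 d2)
    qed
    finally show ?thesis by (simp add: algebra_simps)
  qed
  have "pi / real n * (\<Sum>i=1..n. \<bar>Qf n m x (nang n i)\<bar>) \<le> pi / real n * (\<Sum>i=1..n. integral {0..pi} (F i) / pi)"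
    using n Q_node_bound[OF assms] unfolding F_def al_def be_def
    by (intro mult_left_mono sum_mono) auto
  also have "\<dots> = integral {0..pi} (\<lambda>u. \<Sum>i=1..n. F i u) / real n"
    using Fi by (simp add: integral_sum sum_divide_distrib[symmetric])
  also have "\<dots> = (al + be) * integral {0..pi} (\<lambda>u. \<bar>Qf n m x u\<bar>)"
    unfolding sumF using n by simp
  also have "al + be = (3 * real n + real m) / (real n - real m)"
    unfolding al_def be_def using assms by (simp add: of_nat_diff add_divide_distrib[symmetric])
  finally show ?thesis .
qed

lemma cos_image: "cos ` {0..pi} = {-1..(1::real)}"
proof safe
  fix y :: real assume "y \<in> {-1..1}"
  then show "y \<in> cos ` {0..pi}"
    using arccos_lbound arccos_ubound by (intro image_eqI[where x="arccos y"]) auto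
qed auto

lemma lambda_eq:
  assumes "0 < m" "m < n"
  shows "vp_lambda n m x = integral {0..pi} (\<lambda>u. \<bar>Qf n m x u\<bar>)"
proof -
  define f where "f y = \<bar>vp_s n m x y\<bar> * cheb_w y" for y
  define h where "h u = \<bar>- sin u\<bar> * f (cos u)" for u
  define b where "b = integral {0..pi} (\<lambda>u. \<bar>Qf n m x u\<bar>)"
  have neg: "negligible {0, pi::real}" by (rule negligible_finite) auto
  have eq: "h u = \<bar>Qf n m x u\<bar>" if "u \<in> {0..pi} - {0, pi}" for u
  proof -
    from that have u: "0 < u" "u < pi" by auto
    have s: "0 < sin u" using sin_gt_zero[OF u] .
    have "1 - (cos u)^2 = (sin u)^2" by (simp add: sin_squared_eq)
    then have w: "cheb_w (cos u) = 1 / sin u" unfolding cheb_w_def using s by simp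
    have q: "vp_s n m x (cos u) = Qf n m x u" unfolding Qf_def using s_interp[OF assms] u by simp
    show ?thesis unfolding h_def f_def w q using s by simp
  qed
  have iQ: "(\<lambda>u. \<bar>Qf n m x u\<bar>) integrable_on {0..pi}" by (intro int_on_cont continuous_on_rabs cont_Qf)
  have ih: "h integrable_on {0..pi}" by (rule integrable_spike[OF iQ neg]) (use eq in auto)
  have h0: "0 \<le> h u" for u
  proof -
    have "1 - (cos u)^2 = (sin u)^2" by (simp add: sin_squared_eq)
    then have "0 \<le> 1 - (cos u)^2" by simp
    then show ?thesis unfolding h_def f_def cheb_w_def by simp
  qed
  have ah: "h absolutely_integrable_on {0..pi}" by (rule nonnegative_absolutely_integrable_1[OF ih]) (use h0 in auto)
  have inth: "integral {0..pi} h = b"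
    unfolding b_def by (rule integral_spike[OF neg]) (use eq in auto)
  have der: "(cos has_field_derivative (- sin u)) (at u within {0..pi})" for u
    by (intro DERIV_cos[THEN has_field_derivative_at_within])
  have inj: "inj_on cos {0..pi}" by (rule inj_onI) (use cos_inj_pi in auto)
  note cv = has_absolute_integral_change_of_variables_1'[of "{0..pi}" cos "\<lambda>u. - sin u" f b]
  from cv[OF _ der inj] ah inth have "integral (cos ` {0..pi}) f = b" unfolding h_def by auto
  then show ?thesis unfolding vp_lambda_def cos_image f_def b_def .
qed

lemma s_node_Q:
  assumes "0 < m" "m < n" "i \<in> {1..n}"
  shows "vp_s n m x (cheb_node n i) = Qf n m x (nang n i)"
proof -
  have "vp_s n m x (cos (nang n i)) = Qf n m x (nang n i)"
    unfolding Qf_def using s_interp[OF assms(1,2)] nang_range[of i n] assms(3) by (simp add: less_imp_le)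
  then show ?thesis by (simp add: node_eq)
qed

lemma tilde_eq:
  assumes "0 < m" "m < n"
  shows "vp_lambda_tilde n m x = pi / real n * (\<Sum>i=1..n. \<bar>Qf n m x (nang n i)\<bar>)"
proof -
  have "vp_s n m (cheb_node n i) x = Qf n m x (nang n i)" if "i \<in> {1..n}" for i
  proof -
    have "vp_s n m (cheb_node n i) x = vp_s n m x (cos (nang n i))"
      unfolding vp_s_def node_eq by (simp add: mult.commute)
    also have "\<dots> = Qf n m x (nang n i)"
      unfolding Qf_def using s_interp[OF assms] nang_range[of i n] that by (simp add: less_imp_le)
    finally show ?thesis .
  qed
  then show ?thesis unfolding vp_lambda_tilde_def by simp
qed

theorem theorem2:
  fixes \<theta> :: real
  assumes "0 < \<theta>" and "\<theta> < 1"
  shows "\<exists>C1 C2. C1 > 0 \<and> C2 > 0 \<and>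
    (\<forall>(n::nat) (m::nat) (x::real). m = nat \<lfloor>\<theta> * real n\<rfloor> \<longrightarrow> m \<ge> 1 \<longrightarrow> \<bar>x\<bar> \<le> 1 \<longrightarrow>
       C1 * vp_lambda n m x \<le> vp_lambda_tilde n m x \<and>
       vp_lambda_tilde n m x \<le> C2 * vp_lambda n m x)"
proof (intro exI conjI allI impI)
  show "0 < \<theta> / 2" using assms by simp
  show "0 < 4 / (1 - \<theta>)" using assms by simp
  fix n m :: nat and x :: real
  assume m: "m = nat \<lfloor>\<theta> * real n\<rfloor>" and m1: "1 \<le> m"
  have fl: "real m = of_int \<lfloor>\<theta> * real n\<rfloor>" using m m1 by simp
  have mle: "real m \<le> \<theta> * real n" unfolding fl by (rule of_int_floor_le)
  have mgt: "\<theta> * real n < real m + 1" unfolding fl by (rule real_of_int_floor_add_one_gt)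
  have m0: "0 < m" using m1 by simp
  have "real n > 0"
  proof (rule ccontr)
    assume "\<not> real n > 0"
    then have "real n = 0" by simp
    then show False using mle m1 by simp
  qed
  then have "\<theta> * real n < real n" using assms by simp
  then have "real m < real n" using mle by linarith
  then have mn: "m < n" by simp
  have n: "0 < real n" using mn by simp
  define I where "I = integral {0..pi} (\<lambda>u. \<bar>Qf n m x u\<bar>)"
  define T where "T = pi / real n * (\<Sum>i=1..n. \<bar>Qf n m x (nang n i)\<bar>)"
  have I0: "0 \<le> I" unfolding I_def
    by (rule integral_nonneg) (auto intro: int_on_cont continuous_on_rabs cont_Qf)
  have T0: "0 \<le> T" unfolding T_def using n by (intro mult_nonneg_nonneg sum_nonneg) auto
  have L: "vp_lambda n m x = I" unfolding I_def by (rule lambda_eq[OF m0 mn])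
  have Lt: "vp_lambda_tilde n m x = T" unfolding T_def by (rule tilde_eq[OF m0 mn])
  have ss: "(\<Sum>j=1..n. \<bar>vp_s n m x (cheb_node n j)\<bar>) = (\<Sum>i=1..n. \<bar>Qf n m x (nang n i)\<bar>)"
    by (intro sum.cong refl) (simp add: s_node_Q[OF m0 mn])
  have b1: "I \<le> (real n / real m) * T"
    using int_Q_le[OF m0 mn, of x] unfolding I_def T_def ss .
  have b2: "T \<le> ((3 * real n + real m) / (real n - real m)) * I"
    using tilde_le[OF m0 mn, of x] unfolding I_def T_def .
  have k1: "\<theta> / 2 * (real n / real m) \<le> 1"
    using mgt m1 by (simp add: field_simps)
  show "\<theta> / 2 * vp_lambda n m x \<le> vp_lambda_tilde n m x"
  proof -
    have "\<theta> / 2 * I \<le> \<theta> / 2 * ((real n / real m) * T)" using b1 assms by (intro mult_left_mono) auto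
    also have "\<dots> = (\<theta> / 2 * (real n / real m)) * T" by simp
    also have "\<dots> \<le> 1 * T" by (intro mult_right_mono k1 T0)
    finally show ?thesis unfolding L Lt by simp
  qed
  have k2: "(3 * real n + real m) / (real n - real m) \<le> 4 / (1 - \<theta>)"
  proof -
    have p1: "real m * (5 - \<theta>) \<le> \<theta> * real n * (5 - \<theta>)" using mle assms by (intro mult_right_mono) auto
    have p2: "0 \<le> real n * ((1 - \<theta>) * (1 - \<theta>))" using n by simp
    have "(3 * real n + real m) * (1 - \<theta>) \<le> 4 * (real n - real m)"
      using p1 p2 by (simp add: algebra_simps)
    then show ?thesis using assms \<open>real m < real n\<close> by (simp add: field_simps)
  qed
  show "vp_lambda_tilde n m x \<le> 4 / (1 - \<theta>) * vp_lambda n m x"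
  proof -
    have "T \<le> ((3 * real n + real m) / (real n - real m)) * I" by (rule b2)
    also have "\<dots> \<le> 4 / (1 - \<theta>) * I" by (intro mult_right_mono k2 I0)
    finally show ?thesis unfolding L Lt .
  qed
qed


end
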